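(* Let $\lambda$ be a singular cardinal of countable cofinality, $\kappa>\lambda$ a regular cardinal, and $X=(f_\alpha)_{\alpha<\kappa}$ a $\kappa$-scale for $T_\lambda$. Let $T$ be the down-closure of $X$ in $T_\lambda$ (a $\lambda$-tree with tops $X$). Then for every $T$-graph $G'$, the bipartite graph with bipartition classes $T^{<\omega}$ and $X$ formed by the edges of $G'$ between these sets is a $(\lambda,\kappa)$-graph that has no $(\aleph_0,\kappa)$-subgraph.
   Context: $T_\lambda$ is the order tree of all sequences of elements of $\lambda$ of length at most $\omega$, ordered by initial segment; its elements of length $\omega$ are called tops; $T^{<\omega}$ denotes the finite sequences in $T$. An ideal on $\mathbb{N}$ is a proper subset of $\mathcal{P}(\mathbb{N})$ containing $\emptyset$ and closed under finite unions and subsets. For an ideal $I$ and $f,g:\mathbb{N}\to\lambda$, write $f<_I g$ if $\{n : f(n)\ge g(n)\}\in I$. A $\kappa$-scale for $T_\lambda$ is a family $(f_\alpha)_{\alpha<\kappa}$ of tops for which there exist a strictly increasing sequence $(\lambda_n)_{n\in\mathbb{N}}$ of uncountable regular cardinals with supremum $\lambda$ such that $f_\alpha(n)<\lambda_n$ for all $\alpha,n$, and an ideal $I$ on $\mathbb{N}$ containing all finite sets, such that $f_\alpha<_I f_\beta$ whenever $\alpha<\beta<\kappa$, and for every $g\in\prod_n\lambda_n$ there is $\alpha<\kappa$ with $g<_I f_\alpha$. A $T$-graph is a graph with vertex set $T$ whose edges join comparable points and in which for every $t$ the neighbours of $t$ below $t$ are cofinal in $\{s : s<t\}$. For infinite cardinals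 $\lambda'<\kappa$, a $(\lambda',\kappa)$-graph is a bipartite graph $(A,B)$ with $|A|=\lambda'$, $|B|=\kappa$, each $b\in B$ having infinitely many neighbours in $A$; an $(\aleph_0,\kappa)$-subgraph of $(A,B)$ is a subgraph $(C,D)$ with $C\subseteq A$, $D\subseteq B$ that is an $(\aleph_0,\kappa)$-graph. *)

theory Defs
  imports Main "HOL-Library.Countable_Set" "HOL-Library.Sublist"
begin

text \<open>Cardinals are represented by cardinal-order relations (Main's BNF cardinal library).
  A cardinal lam is a relation with Card_order lam; its elements (ordinals below lam)
  are the members of Field lam, ordered by lam.\<close>

definition reg_uncountable_card_pt :: "'a rel \<Rightarrow> 'a \<Rightarrow> bool" where
  "reg_uncountable_card_pt lam x \<longleftrightarrow>
     x \<in> Field lam \<and>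
     Card_order (Restr lam (underS lam x)) \<and>
     regularCard (Restr lam (underS lam x)) \<and>
     \<not> countable (underS lam x)"

definition ideal_nat :: "nat set set \<Rightarrow> bool" where
  "ideal_nat I \<longleftrightarrow> I \<noteq> Pow UNIV \<and> {} \<in> I \<and>
     (\<forall>A\<in>I. \<forall>B\<in>I. A \<union> B \<in> I) \<and> (\<forall>A\<in>I. \<forall>B. B \<subseteq> A \<longrightarrow> B \<in> I)"

definition less_mod :: "'a rel \<Rightarrow> nat set set \<Rightarrow> (nat \<Rightarrow> 'a) \<Rightarrow> (nat \<Rightarrow> 'a) \<Rightarrow> bool" where
  "less_mod lam I f g \<longleftrightarrow> {n. (g n, f n) \<in> lam} \<in> I"

definition is_scale :: "'a rel \<Rightarrow> 'k rel \<Rightarrow> ('k \<Rightarrow> nat \<Rightarrow> 'a) \<Rightarrow> bool" where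
  "is_scale lam kap f \<longleftrightarrow>
     (\<exists>ln :: nat \<Rightarrow> 'a. \<exists>I.
        (\<forall>n. reg_uncountable_card_pt lam (ln n)) \<and>
        (\<forall>n. ln n \<in> underS lam (ln (Suc n))) \<and>
        (\<forall>a\<in>Field lam. \<exists>n. (a, ln n) \<in> lam) \<and>
        (\<forall>\<alpha>\<in>Field kap. \<forall>n. f \<alpha> n \<in> underS lam (ln n)) \<and>
        ideal_nat I \<and> (\<forall>A. finite A \<longrightarrow> A \<in> I) \<and>
        (\<forall>\<alpha>\<in>Field kap. \<forall>\<beta>\<in>Field kap. \<alpha> \<noteq> \<beta> \<and> (\<alpha>, \<beta>) \<in> kap \<longrightarrow> less_mod lam I (f \<alpha>) (f \<beta>)) \<and>
        (\<forall>g. (\<forall>n. g n \<in> underS lam (ln n)) \<longrightarrow> (\<exists>\<alpha>\<in>Field kap. less_mod lam I g (f \<alpha>))))"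

text \<open>Points of T_lam: finite sequences and tops (sequences of length omega).\<close>
datatype 'a tnode = Fin "'a list" | Top "nat \<Rightarrow> 'a"

fun tless :: "'a tnode \<Rightarrow> 'a tnode \<Rightarrow> bool" where
  "tless (Fin xs) (Fin ys) \<longleftrightarrow> strict_prefix xs ys"
| "tless (Fin xs) (Top g) \<longleftrightarrow> xs = map g [0..<length xs]"
| "tless (Top g) _ \<longleftrightarrow> False"

definition tle :: "'a tnode \<Rightarrow> 'a tnode \<Rightarrow> bool" where
  "tle s t \<longleftrightarrow> tless s t \<or> s = t"

definition scale_tops :: "'k rel \<Rightarrow> ('k \<Rightarrow> nat \<Rightarrow> 'a) \<Rightarrow> 'a tnode set" where
  "scale_tops kap f = (\<lambda>\<alpha>. Top (f \<alpha>)) ` Field kap"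

definition down_closure :: "'a tnode set \<Rightarrow> 'a tnode set" where
  "down_closure X = {s. \<exists>t\<in>X. tle s t}"

definition is_T_graph :: "'a tnode set \<Rightarrow> ('a tnode \<Rightarrow> 'a tnode \<Rightarrow> bool) \<Rightarrow> bool" where
  "is_T_graph T E \<longleftrightarrow>
     (\<forall>u v. E u v \<longrightarrow> u \<in> T \<and> v \<in> T) \<and>
     (\<forall>u v. E u v \<longrightarrow> E v u) \<and> (\<forall>u. \<not> E u u) \<and>
     (\<forall>u v. E u v \<longrightarrow> tless u v \<or> tless v u) \<and>
     (\<forall>t\<in>T. \<forall>s. tless s t \<longrightarrow> (\<exists>u. tle s u \<and> tless u t \<and> E u t))"

definition is_bip_graph :: "'c rel \<Rightarrow> 'd rel \<Rightarrow> 'v set \<Rightarrow> 'v set \<Rightarrow> ('v \<Rightarrow> 'v \<Rightarrow> bool) \<Rightarrow> bool" where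
  "is_bip_graph mu nu A B E \<longleftrightarrow> (card_of A, mu) \<in> ordIso \<and> (card_of B, nu) \<in> ordIso \<and>
     (\<forall>b\<in>B. infinite {a\<in>A. E a b})"

end

theory Submission
  imports Defs "HOL-Library.Countable_Set_Type"
begin
unbundle cardinal_syntax

lemma co_wo: "Card_order r \<Longrightarrow> Well_order r"
  using card_order_on_well_order_on by blast

lemma co_total: "Card_order r \<Longrightarrow> a \<in> Field r \<Longrightarrow> b \<in> Field r \<Longrightarrow> (a,b) \<in> r \<or> (b,a) \<in> r"
  using co_wo[of r] unfolding well_order_on_def linear_order_on_def total_on_def
  by (metis Refl_under_in under_def mem_Collect_eq partial_order_on_def preorder_on_def)

lemma co_refl: "Card_order r \<Longrightarrow> a \<in> Field r \<Longrightarrow> (a,a) \<in> r"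
  using co_wo[of r] unfolding well_order_on_def linear_order_on_def partial_order_on_def preorder_on_def refl_on_def by blast

lemma co_trans: "Card_order r \<Longrightarrow> (a,b) \<in> r \<Longrightarrow> (b,c) \<in> r \<Longrightarrow> (a,c) \<in> r"
  using co_wo[of r] unfolding well_order_on_def linear_order_on_def partial_order_on_def preorder_on_def trans_def
  by blast

lemma co_antisym: "Card_order r \<Longrightarrow> (a,b) \<in> r \<Longrightarrow> (b,a) \<in> r \<Longrightarrow> a = b"
  using co_wo[of r] unfolding well_order_on_def linear_order_on_def partial_order_on_def antisym_def
  by blast

lemma co_Field: "Card_order r \<Longrightarrow> (a,b) \<in> r \<Longrightarrow> a \<in> Field r \<and> b \<in> Field r"
  by (simp add: FieldI1 FieldI2)

lemma Field_Restr_underS: "Card_order r \<Longrightarrow> Field (Restr r (underS r x)) = underS r x"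
proof
  assume c: "Card_order r"
  show "Field (Restr r (underS r x)) \<subseteq> underS r x" unfolding Field_def by auto
  show "underS r x \<subseteq> Field (Restr r (underS r x))"
  proof
    fix a assume a: "a \<in> underS r x"
    then have "a \<in> Field r" unfolding underS_def using co_Field[OF c] by blast
    then have "(a,a) \<in> Restr r (underS r x)" using a co_refl[OF c] by auto
    then show "a \<in> Field (Restr r (underS r x))" unfolding Field_def by blast
  qed
qed

lemma lists_card:
  assumes inf: "infinite F"
  shows "|{xs. set xs \<subseteq> F}| \<le>o |F|"
proof -
  define L where "L n = {xs. length xs = n \<and> set xs \<subseteq> F}" for n
  have Ln: "|L n| \<le>o |F|" for n
  proof (induction n)
    case 0
    have "L 0 = {[]}" unfolding L_def by auto
    moreover obtain a where "a \<in> F" using inf infinite_imp_nonempty by blast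
    ultimately show ?case using card_of_singl_ordLeq[of F "[]"] by auto
  next
    case (Suc n)
    have "L (Suc n) = (\<lambda>(x,xs). x # xs) ` (F \<times> L n)"
      unfolding L_def by (auto simp: image_iff length_Suc_conv)
    moreover have "|(\<lambda>(x,xs). x # xs) ` (F \<times> L n)| \<le>o |F \<times> L n|" by (rule card_of_image)
    moreover have "|F \<times> L n| \<le>o |F \<times> F|" using card_of_Times_mono2[OF Suc] .
    moreover have "|F \<times> F| =o |F|" using card_of_Times_same_infinite[OF inf] .
    ultimately show ?case using ordLeq_transitive ordLeq_ordIso_trans by metis
  qed
  have "{xs. set xs \<subseteq> F} = (\<Union>n\<in>UNIV. L n)" unfolding L_def by auto
  moreover have "|\<Union>n\<in>(UNIV::nat set). L n| \<le>o |F|"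
    by (rule card_of_UNION_ordLeq_infinite) (use inf infinite_iff_card_of_nat Ln in auto)
  ultimately show ?thesis by simp
qed

lemma cofinal_card:
  assumes c: "Card_order lam" and x: "reg_uncountable_card_pt lam x"
    and V: "V \<subseteq> underS lam x"
    and cof: "\<forall>a\<in>underS lam x. \<exists>v\<in>V. a \<noteq> v \<and> (a,v) \<in> lam"
  shows "|underS lam x| \<le>o |V|"
proof -
  let ?U = "underS lam x" let ?R = "Restr lam ?U"
  have F: "Field ?R = ?U" using Field_Restr_underS[OF c] .
  have "cofinal V ?R" unfolding cofinal_def F using cof V by blast
  then have "|V| =o ?R" using x V F unfolding reg_uncountable_card_pt_def regularCard_def by auto
  moreover have "|?U| =o ?R" using card_of_Field_ordIso[of ?R] x F unfolding reg_uncountable_card_pt_def by auto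
  ultimately show ?thesis by (meson ordIso_iff_ordLeq ordIso_symmetric ordIso_transitive)
qed

lemma strict_bound:
  assumes c: "Card_order lam" and x: "reg_uncountable_card_pt lam x"
    and S: "S \<subseteq> underS lam x" and cS: "countable S"
  shows "\<exists>g\<in>underS lam x. \<forall>b\<in>S. (b,g) \<in> lam \<and> b \<noteq> g"
proof (rule ccontr)
  assume nb: "\<not> ?thesis"
  let ?U = "underS lam x" let ?R = "Restr lam ?U"
  have F: "Field ?R = ?U" using Field_Restr_underS[OF c] .
  have cR: "Card_order ?R" and rR: "regularCard ?R" and uc: "\<not> countable ?U"
    using x unfolding reg_uncountable_card_pt_def by auto
  have Usub: "?U \<subseteq> Field lam" unfolding underS_def using co_Field[OF c] by blast
  have "cofinal S ?R" unfolding cofinal_def F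
  proof
    fix a assume a: "a \<in> ?U"
    have "infinite (Field ?R)" using F uc countable_finite by auto
    then have "Field ?R \<noteq> under ?R a" using Card_order_infinite_not_under[OF cR] by blast
    moreover have "under ?R a \<subseteq> Field ?R" unfolding under_def Field_def by blast
    ultimately obtain a' where a': "a' \<in> ?U" "(a',a) \<notin> ?R" using F unfolding under_def by blast
    then have "(a',a) \<notin> lam" using a by auto
    then have aa': "(a,a') \<in> lam" "a \<noteq> a'" using co_total[OF c, of a a'] co_refl[OF c, of a] a a' Usub by auto
    from nb a' obtain b where b: "b \<in> S" "\<not> ((b,a') \<in> lam \<and> b \<noteq> a')" by blast
    have "b \<in> Field lam" using b S Usub by auto
    then have "(a',b) \<in> lam" using b co_total[OF c, of a' b] co_refl[OF c, of b] a' Usub by auto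
    then have "(a,b) \<in> lam" using co_trans[OF c] aa' by blast
    moreover have "a \<noteq> b" using co_antisym[OF c, of a' a] aa' \<open>(a',b) \<in> lam\<close> \<open>(a',a) \<notin> lam\<close> by auto
    ultimately show "\<exists>b\<in>S. a \<noteq> b \<and> (a,b) \<in> ?R" using b S a by auto
  qed
  then have "|S| =o ?R" using rR S F unfolding regularCard_def by auto
  moreover have "|?U| =o ?R" using card_of_Field_ordIso[OF cR] F by auto
  ultimately have "|?U| \<le>o |S|" by (meson ordIso_iff_ordLeq ordIso_symmetric ordIso_transitive)
  moreover have "|S| \<le>o |UNIV :: nat set|" using cS countable_card_of_nat by blast
  ultimately have "countable ?U" using countable_card_of_nat ordLeq_transitive by blast
  then show False using uc by blast
qed

lemma underS_trans:
  assumes c: "Card_order r" and "a \<in> underS r b" and "b \<in> underS r d"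
  shows "a \<in> underS r d"
proof -
  have "(a,b) \<in> r" "a \<noteq> b" "(b,d) \<in> r" "b \<noteq> d" using assms unfolding underS_def by auto
  moreover have "(a,d) \<in> r" using co_trans[OF c] \<open>(a,b) \<in> r\<close> \<open>(b,d) \<in> r\<close> by blast
  moreover have "a \<noteq> d" using co_antisym[OF c, of b a] \<open>(a,b) \<in> r\<close> \<open>(b,d) \<in> r\<close> \<open>a \<noteq> b\<close> by blast
  ultimately show ?thesis unfolding underS_def by blast
qed

lemma chain_lt:
  assumes c: "Card_order r" and ch: "\<forall>n. ln n \<in> underS r (ln (Suc n))"
  shows "n < m \<Longrightarrow> ln n \<in> underS r (ln m)"
proof (induction m)
  case 0 then show ?case by simp
next
  case (Suc m)
  show ?case
  proof (cases "n = m")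
    case True then show ?thesis using ch by simp
  next
    case False then have "n < m" using Suc by simp
    then show ?thesis using Suc.IH ch underS_trans[OF c] by blast
  qed
qed

lemma ideal_univ: assumes I: "ideal_nat I" shows "UNIV \<notin> I"
proof
  assume u: "UNIV \<in> I"
  have "\<forall>B. B \<in> I" using u I unfolding ideal_nat_def by (meson subset_UNIV)
  then have "I = Pow UNIV" by auto
  then show False using I unfolding ideal_nat_def by auto
qed

lemma ideal_sub: "ideal_nat I \<Longrightarrow> A \<in> I \<Longrightarrow> B \<subseteq> A \<Longrightarrow> B \<in> I"
  unfolding ideal_nat_def by blast

lemma ideal_un: "ideal_nat I \<Longrightarrow> A \<in> I \<Longrightarrow> B \<in> I \<Longrightarrow> A \<union> B \<in> I"
  unfolding ideal_nat_def by blast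

lemma less_mod_trans:
  assumes c: "Card_order lam" and I: "ideal_nat I"
    and g: "\<And>n. g n \<in> Field lam" and h: "\<And>n. h n \<in> Field lam" and k: "\<And>n. k n \<in> Field lam"
    and 1: "less_mod lam I g h" and 2: "less_mod lam I h k"
  shows "less_mod lam I g k"
proof -
  have "{n. (k n, g n) \<in> lam} \<subseteq> {n. (h n, g n) \<in> lam} \<union> {n. (k n, h n) \<in> lam}"
  proof
    fix n assume "n \<in> {n. (k n, g n) \<in> lam}"
    then have kg: "(k n, g n) \<in> lam" by simp
    show "n \<in> {n. (h n, g n) \<in> lam} \<union> {n. (k n, h n) \<in> lam}"
    proof (cases "(h n, g n) \<in> lam")
      case False
      then have "(g n, h n) \<in> lam" using co_total[OF c, of "g n" "h n"] g h by auto
      then show ?thesis using co_trans[OF c] kg by blast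
    qed simp
  qed
  moreover have "{n. (h n, g n) \<in> lam} \<union> {n. (k n, h n) \<in> lam} \<in> I"
    using 1 2 ideal_un[OF I] unfolding less_mod_def by blast
  ultimately show ?thesis using ideal_sub[OF I] unfolding less_mod_def by blast
qed



lemma Fin_in_T:
  "Fin xs \<in> down_closure (scale_tops kap f) \<longleftrightarrow> (\<exists>\<alpha>\<in>Field kap. xs = map (f \<alpha>) [0..<length xs])"
  unfolding down_closure_def scale_tops_def tle_def by auto

lemma Top_in_T:
  "Top g \<in> down_closure (scale_tops kap f) \<longleftrightarrow> (\<exists>\<alpha>\<in>Field kap. g = f \<alpha>)"
  unfolding down_closure_def scale_tops_def tle_def by auto

lemma tle_Fin_len: "tle (Fin xs) (Fin ys) \<Longrightarrow> length xs \<le> length ys"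
  unfolding tle_def by (auto simp: strict_prefix_def dest: prefix_length_le)

lemma tless_Top: "tless u (Top g) \<Longrightarrow> \<exists>xs. u = Fin xs \<and> xs = map g [0..<length xs]"
  by (cases u) auto

theorem proposition7p4:
  fixes lam :: "'a rel" and kap :: "'k rel" and f :: "'k \<Rightarrow> nat \<Rightarrow> 'a"
    and E :: "'a tnode \<Rightarrow> 'a tnode \<Rightarrow> bool"
  assumes lam_card: "Card_order lam" and lam_inf: "infinite (Field lam)"
    and lam_sing: "\<not> regularCard lam"
    and lam_cof: "\<exists>K. K \<subseteq> Field lam \<and> countable K \<and> cofinal K lam"
    and kap_card: "Card_order kap" and kap_reg: "regularCard kap"
    and lam_less_kap: "(lam, kap) \<in> ordLess"
    and scale: "is_scale lam kap f"
    and Tgraph: "is_T_graph (down_closure (scale_tops kap f)) E"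
  shows "is_bip_graph lam kap
           {s \<in> down_closure (scale_tops kap f). \<exists>xs. s = Fin xs}
           (scale_tops kap f) E
       \<and> \<not> (\<exists>C D. C \<subseteq> {s \<in> down_closure (scale_tops kap f). \<exists>xs. s = Fin xs}
                \<and> D \<subseteq> scale_tops kap f \<and> is_bip_graph natLeq kap C D E)"
proof -
  define X where "X = scale_tops kap f"
  define T where "T = down_closure X"
  define A where "A = {s \<in> T. \<exists>xs. s = Fin xs}"
  from scale obtain ln I where
    ln_reg: "\<forall>n. reg_uncountable_card_pt lam (ln n)" and
    ln_ch: "\<forall>n. ln n \<in> underS lam (ln (Suc n))" and
    ln_cof: "\<forall>a\<in>Field lam. \<exists>n. (a, ln n) \<in> lam" and
    f_in: "\<forall>\<alpha>\<in>Field kap. \<forall>n. f \<alpha> n \<in> underS lam (ln n)" and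
    I: "ideal_nat I" and Ifin: "\<forall>A. finite A \<longrightarrow> A \<in> I" and
    f_mono: "\<forall>\<alpha>\<in>Field kap. \<forall>\<beta>\<in>Field kap. \<alpha> \<noteq> \<beta> \<and> (\<alpha>, \<beta>) \<in> kap \<longrightarrow> less_mod lam I (f \<alpha>) (f \<beta>)" and
    f_cof: "\<forall>g. (\<forall>n. g n \<in> underS lam (ln n)) \<longrightarrow> (\<exists>\<alpha>\<in>Field kap. less_mod lam I g (f \<alpha>))"
    using scale unfolding is_scale_def by (elim exE conjE) (rule that; assumption)
  define U where "U n = underS lam (ln n)" for n
  have U_F: "U n \<subseteq> Field lam" for n unfolding U_def underS_def using co_Field[OF lam_card] by blast
  have U_ne: "U n \<noteq> {}" for n using ln_reg[rule_format, of n] countable_empty unfolding reg_uncountable_card_pt_def U_def by metis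
  have fU: "\<alpha> \<in> Field kap \<Longrightarrow> f \<alpha> n \<in> U n" for \<alpha> n using f_in U_def by blast
  have fF: "\<alpha> \<in> Field kap \<Longrightarrow> f \<alpha> n \<in> Field lam" for \<alpha> n using fU U_F by blast
  have UNIV_I: "UNIV \<notin> I" using ideal_univ[OF I] .
  have FinA: "Fin xs \<in> A \<longleftrightarrow> (\<exists>\<alpha>\<in>Field kap. xs = map (f \<alpha>) [0..<length xs])" for xs
    unfolding A_def T_def X_def using Fin_in_T by auto
  have A_Fin: "a \<in> A \<Longrightarrow> \<exists>xs. a = Fin xs" for a unfolding A_def by auto
  have f_inj: "inj_on f (Field kap)"
  proof (rule inj_onI)
    fix \<alpha> \<beta> assume a: "\<alpha> \<in> Field kap" "\<beta> \<in> Field kap" "f \<alpha> = f \<beta>"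
    show "\<alpha> = \<beta>"
    proof (rule ccontr)
      assume ne: "\<alpha> \<noteq> \<beta>"
      have "(\<alpha>,\<beta>) \<in> kap \<or> (\<beta>,\<alpha>) \<in> kap" using co_total[OF kap_card] a by blast
      then have "less_mod lam I (f \<alpha>) (f \<beta>) \<or> less_mod lam I (f \<beta>) (f \<alpha>)" using f_mono a ne by metis
      then have "{n. (f \<alpha> n, f \<alpha> n) \<in> lam} \<in> I" unfolding less_mod_def using a by simp
      moreover have "{n. (f \<alpha> n, f \<alpha> n) \<in> lam} = UNIV" using co_refl[OF lam_card] fF a by blast
      ultimately show False using UNIV_I by simp
    qed
  qed
  have A_le: "|A| \<le>o |Field lam|"
  proof -
    have "A \<subseteq> Fin ` {xs. set xs \<subseteq> Field lam}"
    proof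
      fix a assume a: "a \<in> A"
      then obtain xs where xs: "a = Fin xs" using A_Fin by blast
      then obtain \<alpha> where al: "\<alpha> \<in> Field kap" "xs = map (f \<alpha>) [0..<length xs]" using FinA a by blast
      then have "set xs \<subseteq> Field lam" using fF by (metis ex_map_conv subsetI)
      then show "a \<in> Fin ` {xs. set xs \<subseteq> Field lam}" using xs by blast
    qed
    then have "|A| \<le>o |Fin ` {xs. set xs \<subseteq> Field lam}|" by (rule card_of_mono1)
    also have "|Fin ` {xs. set xs \<subseteq> Field lam}| \<le>o |{xs. set xs \<subseteq> Field lam}|" by (rule card_of_image)
    also have "|{xs. set xs \<subseteq> Field lam}| \<le>o |Field lam|" using lists_card lam_inf by blast
    finally show ?thesis .
  qed
  define N' where "N' = {n. \<not> (\<exists>\<gamma>\<in>U n. \<forall>\<alpha>\<in>Field kap. (f \<alpha> n, \<gamma>) \<in> lam)}"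
  have N'_inf: "infinite N'"
  proof
    assume fin: "finite N'"
    define g where "g n = (if n \<in> N' then (SOME \<gamma>. \<gamma> \<in> U n) else (SOME \<gamma>. \<gamma> \<in> U n \<and> (\<forall>\<alpha>\<in>Field kap. (f \<alpha> n, \<gamma>) \<in> lam)))" for n
    have g12: "g n \<in> U n \<and> (n \<notin> N' \<longrightarrow> (\<forall>\<alpha>\<in>Field kap. (f \<alpha> n, g n) \<in> lam))" for n
    proof (cases "n \<in> N'")
      case True
      have "\<exists>\<gamma>. \<gamma> \<in> U n" using U_ne by blast
      then have "(SOME \<gamma>. \<gamma> \<in> U n) \<in> U n" by (rule someI_ex)
      then show ?thesis using True unfolding g_def by simp
    next
      case False
      then have "\<exists>\<gamma>. \<gamma> \<in> U n \<and> (\<forall>\<alpha>\<in>Field kap. (f \<alpha> n, \<gamma>) \<in> lam)" unfolding N'_def by blast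
      then have "(SOME \<gamma>. \<gamma> \<in> U n \<and> (\<forall>\<alpha>\<in>Field kap. (f \<alpha> n, \<gamma>) \<in> lam)) \<in> U n \<and>
          (\<forall>\<alpha>\<in>Field kap. (f \<alpha> n, (SOME \<gamma>. \<gamma> \<in> U n \<and> (\<forall>\<alpha>\<in>Field kap. (f \<alpha> n, \<gamma>) \<in> lam))) \<in> lam)"
        by (rule someI_ex)
      then show ?thesis using False unfolding g_def by simp
    qed
    have "\<forall>n. g n \<in> underS lam (ln n)" using g12 unfolding U_def by blast
    then obtain \<alpha> where al: "\<alpha> \<in> Field kap" "less_mod lam I g (f \<alpha>)" using f_cof by blast
    have "- N' \<subseteq> {n. (f \<alpha> n, g n) \<in> lam}" using g12 al(1) by blast
    then have "- N' \<in> I" using al ideal_sub[OF I] unfolding less_mod_def by blast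
    moreover have "N' \<in> I" using Ifin fin by blast
    ultimately have "- N' \<union> N' \<in> I" using ideal_un[OF I] by blast
    then show False using UNIV_I by simp
  qed
  have UA: "|U n| \<le>o |A|" if n: "n \<in> N'" for n
  proof -
    let ?V = "(\<lambda>\<alpha>. f \<alpha> n) ` Field kap"
    have "|U n| \<le>o |?V|" unfolding U_def
    proof (rule cofinal_card[OF lam_card ln_reg[rule_format]])
      show "?V \<subseteq> underS lam (ln n)" using fU U_def by blast
      show "\<forall>a\<in>underS lam (ln n). \<exists>v\<in>?V. a \<noteq> v \<and> (a, v) \<in> lam"
      proof
        fix a assume a: "a \<in> underS lam (ln n)"
        then obtain \<alpha> where al: "\<alpha> \<in> Field kap" "(f \<alpha> n, a) \<notin> lam" using n U_def unfolding N'_def by blast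
        have "a \<in> Field lam" using a U_F U_def by blast
        then have "(a, f \<alpha> n) \<in> lam" "a \<noteq> f \<alpha> n" using co_total[OF lam_card] co_refl[OF lam_card] fF al by blast+
        then show "\<exists>v\<in>?V. a \<noteq> v \<and> (a, v) \<in> lam" using al by blast
      qed
    qed
    moreover have "?V \<subseteq> (\<lambda>s. case s of Fin xs \<Rightarrow> xs ! n | Top _ \<Rightarrow> undefined) ` A"
    proof
      fix v assume "v \<in> ?V"
      then obtain \<alpha> where al: "\<alpha> \<in> Field kap" "v = f \<alpha> n" by blast
      have "Fin (map (f \<alpha>) [0..<Suc n]) \<in> A" using FinA al by auto
      moreover have "v = map (f \<alpha>) [0..<Suc n] ! n" using al by (simp del: upt_Suc)
      ultimately show "v \<in> (\<lambda>s. case s of Fin xs \<Rightarrow> xs ! n | Top _ \<Rightarrow> undefined) ` A"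
        by (metis (no_types, lifting) image_eqI tnode.simps(5))
    qed
    then have "|?V| \<le>o |A|" using card_of_mono1 card_of_image ordLeq_transitive by metis
    ultimately show ?thesis using ordLeq_transitive by blast
  qed
  obtain n0 where n0: "n0 \<in> N'" using N'_inf infinite_imp_nonempty by blast
  have A_inf: "infinite A"
  proof -
    have "\<not> countable (U n0)" using ln_reg U_def unfolding reg_uncountable_card_pt_def by auto
    then have "infinite (U n0)" using countable_finite by blast
    then show ?thesis using UA[OF n0] card_of_ordLeq_infinite by blast
  qed
  have F_sub: "Field lam \<subseteq> (\<Union>n\<in>N'. U n)"
  proof
    fix a assume a: "a \<in> Field lam"
    then obtain n where n: "(a, ln n) \<in> lam" using ln_cof by blast
    obtain m where m: "m \<in> N'" "n < m" using N'_inf by (meson infinite_nat_iff_unbounded)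
    have lnm: "ln n \<in> underS lam (ln m)" using chain_lt[OF lam_card ln_ch m(2)] .
    then have "(ln n, ln m) \<in> lam" "ln n \<noteq> ln m" unfolding underS_def by auto
    then have "(a, ln m) \<in> lam" "a \<noteq> ln m" using n co_trans[OF lam_card] co_antisym[OF lam_card] by blast+
    then show "a \<in> (\<Union>n\<in>N'. U n)" using m U_def unfolding underS_def by blast
  qed
  have F_le: "|Field lam| \<le>o |A|"
  proof -
    have "|N'| \<le>o |A|" using card_of_mono1[of N' "UNIV::nat set"] A_inf infinite_iff_card_of_nat ordLeq_transitive by blast
    then have "|\<Union>n\<in>N'. U n| \<le>o |A|" using card_of_UNION_ordLeq_infinite[OF A_inf] UA by blast
    then show ?thesis using card_of_mono1[OF F_sub] ordLeq_transitive by blast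
  qed
  have A_iso: "|A| =o lam"
    using A_le F_le card_of_Field_ordIso[OF lam_card] ordIso_iff_ordLeq ordIso_transitive by blast
  have X_iso: "|X| =o kap"
  proof -
    have "inj_on (\<lambda>\<alpha>. Top (f \<alpha>)) (Field kap)" using f_inj unfolding inj_on_def by auto
    then have "bij_betw (\<lambda>\<alpha>. Top (f \<alpha>)) (Field kap) X" unfolding X_def scale_tops_def bij_betw_def by blast
    then have "|Field kap| =o |X|" using card_of_ordIso by blast
    then show ?thesis using card_of_Field_ordIso[OF kap_card] ordIso_symmetric ordIso_transitive by blast
  qed
  have Tg: "\<And>u v. E u v \<Longrightarrow> u \<in> T \<and> v \<in> T" "\<And>u v. E u v \<Longrightarrow> tless u v \<or> tless v u"
    "\<And>t s. t \<in> T \<Longrightarrow> tless s t \<Longrightarrow> \<exists>u. tle s u \<and> tless u t \<and> E u t"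
    using Tgraph unfolding is_T_graph_def T_def X_def by blast+
  have nbr_inf: "infinite {a \<in> A. E a b}" if b: "b \<in> X" for b
  proof
    assume fin: "finite {a \<in> A. E a b}"
    define len where "len s = (case s of Fin xs \<Rightarrow> length xs | Top _ \<Rightarrow> 0)" for s :: "'a tnode"
    obtain K where K: "\<forall>a \<in> {a \<in> A. E a b}. len a \<le> K"
      using finite_nat_set_iff_bounded_le fin by (metis finite_imageI imageI)
    obtain \<beta> where be: "\<beta> \<in> Field kap" "b = Top (f \<beta>)" using b unfolding X_def scale_tops_def by blast
    have bT: "b \<in> T" using b unfolding T_def down_closure_def tle_def by blast
    have "tless (Fin (map (f \<beta>) [0..<Suc K])) b" using be by simp
    then obtain u where u: "tle (Fin (map (f \<beta>) [0..<Suc K])) u" "tless u b" "E u b" using Tg(3)[OF bT] by blast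
    obtain ys where ys: "u = Fin ys" using tless_Top u(2) be by blast
    have "u \<in> A" using Tg(1)[OF u(3)] ys unfolding A_def by blast
    then have "len u \<le> K" using K u(3) by blast
    moreover have "Suc K \<le> len u" using tle_Fin_len u(1) ys unfolding len_def by fastforce
    ultimately show False by simp
  qed
  have part1: "is_bip_graph lam kap A X E"
    unfolding is_bip_graph_def using A_iso X_iso nbr_inf by blast
  have part2: "\<not> (\<exists>C D. C \<subseteq> A \<and> D \<subseteq> X \<and> is_bip_graph natLeq kap C D E)"
  proof
    assume "\<exists>C D. C \<subseteq> A \<and> D \<subseteq> X \<and> is_bip_graph natLeq kap C D E"
    then obtain C D where CA: "C \<subseteq> A" and DX: "D \<subseteq> X" and bg: "is_bip_graph natLeq kap C D E" by blast
    have "|C| =o natLeq" using bg unfolding is_bip_graph_def by blast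
    then have cC: "countable C" using countable_card_le_natLeq ordIso_iff_ordLeq by blast
    have Dk: "|D| =o kap" and Dn: "\<forall>b\<in>D. infinite {a\<in>C. E a b}" using bg unfolding is_bip_graph_def by auto
    define S where "S n = (\<lambda>s. case s of Fin xs \<Rightarrow> xs ! n | Top _ \<Rightarrow> undefined) ` {s\<in>C. \<exists>xs. s = Fin xs \<and> n < length xs}" for n
    have S_cnt: "countable (S n)" for n
    proof -
      have "{s\<in>C. \<exists>xs. s = Fin xs \<and> n < length xs} \<subseteq> C" by blast
      then have "countable {s\<in>C. \<exists>xs. s = Fin xs \<and> n < length xs}" using countable_subset cC by blast
      then show ?thesis unfolding S_def by (rule countable_image)
    qed
    have S_U: "S n \<subseteq> U n" for n
    proof
      fix v assume "v \<in> S n"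
      then obtain s where s: "s \<in> C" "\<exists>xs. s = Fin xs \<and> n < length xs"
        "v = (case s of Fin xs \<Rightarrow> xs ! n | Top _ \<Rightarrow> undefined)" unfolding S_def by blast
      then obtain xs where xs: "Fin xs \<in> C" "n < length xs" "v = xs ! n" by auto
      then obtain \<alpha> where al: "\<alpha> \<in> Field kap" "xs = map (f \<alpha>) [0..<length xs]" using CA FinA by blast
      have "xs ! n = map (f \<alpha>) [0..<length xs] ! n" using al(2) by (rule arg_cong)
      also have "\<dots> = f \<alpha> n" using xs(2) by simp
      finally show "v \<in> U n" using xs(3) fU[OF al(1)] by simp
    qed
    define g where "g n = (SOME \<gamma>. \<gamma> \<in> U n \<and> (\<forall>b\<in>S n. (b,\<gamma>) \<in> lam \<and> b \<noteq> \<gamma>))" for n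
    have g: "g n \<in> U n \<and> (\<forall>b\<in>S n. (b, g n) \<in> lam \<and> b \<noteq> g n)" for n
    proof -
      have "\<exists>\<gamma>\<in>underS lam (ln n). \<forall>b\<in>S n. (b,\<gamma>) \<in> lam \<and> b \<noteq> \<gamma>"
      proof (rule strict_bound[OF lam_card ln_reg[rule_format, of n]])
        show "S n \<subseteq> underS lam (ln n)" using S_U[of n] unfolding U_def .
        show "countable (S n)" by (rule S_cnt)
      qed
      then have "\<exists>\<gamma>. \<gamma> \<in> U n \<and> (\<forall>b\<in>S n. (b,\<gamma>) \<in> lam \<and> b \<noteq> \<gamma>)" unfolding U_def by blast
      then have "(SOME \<gamma>. \<gamma> \<in> U n \<and> (\<forall>b\<in>S n. (b,\<gamma>) \<in> lam \<and> b \<noteq> \<gamma>)) \<in> U n \<and>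
         (\<forall>b\<in>S n. (b,(SOME \<gamma>. \<gamma> \<in> U n \<and> (\<forall>b\<in>S n. (b,\<gamma>) \<in> lam \<and> b \<noteq> \<gamma>))) \<in> lam \<and> b \<noteq> (SOME \<gamma>. \<gamma> \<in> U n \<and> (\<forall>b\<in>S n. (b,\<gamma>) \<in> lam \<and> b \<noteq> \<gamma>)))"
        by (rule someI_ex)
      then show ?thesis unfolding g_def .
    qed
    have "\<forall>n. g n \<in> underS lam (ln n)"
    proof
      fix n show "g n \<in> underS lam (ln n)" using conjunct1[OF g[of n]] unfolding U_def .
    qed
    then obtain \<alpha> where al: "\<alpha> \<in> Field kap" "less_mod lam I g (f \<alpha>)" using f_cof by blast
    have gF: "g n \<in> Field lam" for n using conjunct1[OF g[of n]] U_F[of n] by blast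
    have Dsub: "D \<subseteq> (\<lambda>\<beta>. Top (f \<beta>)) ` underS kap \<alpha>"
    proof
      fix d assume d: "d \<in> D"
      obtain \<beta> where be: "\<beta> \<in> Field kap" "d = Top (f \<beta>)" using DX d unfolding X_def scale_tops_def by blast
      have "(\<alpha>,\<beta>) \<notin> kap"
      proof
        assume ab: "(\<alpha>,\<beta>) \<in> kap"
        have lm: "less_mod lam I g (f \<beta>)"
        proof (cases "\<alpha> = \<beta>")
          case True then show ?thesis using al by simp
        next
          case False
          then have "less_mod lam I (f \<alpha>) (f \<beta>)" using f_mono al(1) be(1) ab by blast
          then show ?thesis using less_mod_trans[OF lam_card I, of g "f \<alpha>" "f \<beta>"] gF fF al be by blast
        qed
        have all: "(f \<beta> n, g n) \<in> lam" for n
        proof (rule ccontr)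
          assume nn: "(f \<beta> n, g n) \<notin> lam"
          have "{a\<in>C. E a d} \<subseteq> (\<lambda>k. Fin (map (f \<beta>) [0..<k])) ` {..n}"
          proof
            fix a assume a: "a \<in> {a\<in>C. E a d}"
            then obtain xs where xs: "a = Fin xs" using CA A_Fin by blast
            have "tless a d \<or> tless d a" using Tg(2) a by blast
            then have xs_eq: "xs = map (f \<beta>) [0..<length xs]" using be xs by auto
            have "length xs \<le> n"
            proof (rule ccontr)
              assume "\<not> length xs \<le> n"
              then have ln: "n < length xs" by simp
              then have "xs ! n \<in> S n" using a xs unfolding S_def by force
              moreover have "xs ! n = map (f \<beta>) [0..<length xs] ! n" using xs_eq by (rule arg_cong)
              moreover have "map (f \<beta>) [0..<length xs] ! n = f \<beta> n" using ln by simp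
              ultimately show False using conjunct2[OF g[of n]] nn by metis
            qed
            then show "a \<in> (\<lambda>k. Fin (map (f \<beta>) [0..<k])) ` {..n}" using xs xs_eq by blast
          qed
          then have "finite {a\<in>C. E a d}" using finite_subset by blast
          then show False using Dn d by blast
        qed
        then have "{n. (f \<beta> n, g n) \<in> lam} = UNIV" by blast
        then show False using lm UNIV_I unfolding less_mod_def by simp
      qed
      then have "(\<beta>,\<alpha>) \<in> kap" "\<beta> \<noteq> \<alpha>" using co_total[OF kap_card] co_refl[OF kap_card] be al by blast+
      then show "d \<in> (\<lambda>\<beta>. Top (f \<beta>)) ` underS kap \<alpha>" using be unfolding underS_def by blast
    qed
    have "|D| \<le>o |underS kap \<alpha>|" using card_of_mono1[OF Dsub] card_of_image ordLeq_transitive by blast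
    moreover have "|underS kap \<alpha>| <o kap" using card_of_underS[OF kap_card al(1)] .
    ultimately have "|D| <o kap" using ordLeq_ordLess_trans by blast
    then show False using Dk not_ordLess_ordIso by blast
  qed
  show ?thesis using part1 part2 unfolding A_def T_def X_def by blast
qed

end
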